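(* Let $\mathcal{O}$ be an $m$-dimensional pseudo USO with $m\geq 3$, with vertex set $[V,W]$, such that $V$ is a global sink of $\mathcal{O}$. Then $\mathcal{O}$ contains a directed cycle all of whose vertices are of the form $V\cup\{i\}$ or $V\cup\{i,j\}$ with $i,j\in W\setminus V$.
   Context: For sets $U,V$ let $U\oplus V=(U\cup V)\setminus(U\cap V)$, and for $U\subseteq W$ let $[U,W]=\{X: U\subseteq X\subseteq W\}$. A cube orientation is a directed graph with vertex set $[U,W]$ which, for every vertex $X$ and every $i\in W\setminus U$, contains exactly one of the directed edges $(X,X\oplus\{i\})$ and $(X\oplus\{i\},X)$; its dimension is $|W\setminus U|$. A face is the subgraph induced by a subinterval $[U',W']\subseteq[U,W]$; it is proper if $[U',W']\neq[U,W]$. A sink is a vertex with no outgoing edge. A pseudo USO is a cube orientation that does not have a unique global sink, but in which every proper face has a unique sink. *)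

theory Defs
  imports Main
begin

definition symdiff :: "'a set \<Rightarrow> 'a set \<Rightarrow> 'a set" where
  "symdiff A B = (A \<union> B) - (A \<inter> B)"

definition interval :: "'a set \<Rightarrow> 'a set \<Rightarrow> 'a set set" where
  "interval U W = {X. U \<subseteq> X \<and> X \<subseteq> W}"

definition cube_orientation :: "'a set \<Rightarrow> 'a set \<Rightarrow> ('a set \<times> 'a set) set \<Rightarrow> bool" where
  "cube_orientation U W E \<longleftrightarrow>
     U \<subseteq> W \<and>
     E \<subseteq> {(X, symdiff X {i}) | X i. X \<in> interval U W \<and> i \<in> W - U} \<and>
     (\<forall>X \<in> interval U W. \<forall>i \<in> W - U.
        ((X, symdiff X {i}) \<in> E) \<noteq> ((symdiff X {i}, X) \<in> E))"

definition cube_dim :: "'a set \<Rightarrow> 'a set \<Rightarrow> nat" where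
  "cube_dim U W = card (W - U)"

definition face_sink :: "('a set \<times> 'a set) set \<Rightarrow> 'a set \<Rightarrow> 'a set \<Rightarrow> 'a set \<Rightarrow> bool" where
  "face_sink E U' W' X \<longleftrightarrow> X \<in> interval U' W' \<and> (\<forall>Y \<in> interval U' W'. (X, Y) \<notin> E)"

definition has_unique_sink :: "('a set \<times> 'a set) set \<Rightarrow> 'a set \<Rightarrow> 'a set \<Rightarrow> bool" where
  "has_unique_sink E U' W' \<longleftrightarrow> (\<exists>!X. face_sink E U' W' X)"

definition pseudo_USO :: "'a set \<Rightarrow> 'a set \<Rightarrow> ('a set \<times> 'a set) set \<Rightarrow> bool" where
  "pseudo_USO U W E \<longleftrightarrow>
     cube_orientation U W E \<and>
     \<not> has_unique_sink E U W \<and>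
     (\<forall>U' W'. U \<subseteq> U' \<and> U' \<subseteq> W' \<and> W' \<subseteq> W \<and> interval U' W' \<noteq> interval U W
        \<longrightarrow> has_unique_sink E U' W')"

definition directed_cycle :: "('a set \<times> 'a set) set \<Rightarrow> 'a set list \<Rightarrow> bool" where
  "directed_cycle E cs \<longleftrightarrow> length cs \<ge> 2 \<and> distinct cs \<and>
     (\<forall>k < length cs. (cs ! k, cs ! ((k + 1) mod length cs)) \<in> E)"

end

theory Submission
  imports Defs
begin

lemma symdiff_single: "symdiff X {i} = (if i \<in> X then X - {i} else insert i X)"
  by (auto simp: symdiff_def)

lemma cycle_exists:
  assumes fin: "finite L" and ne: "L \<noteq> {}" and succ: "\<forall>x\<in>L. \<exists>y\<in>L. (x,y)\<in>E"
  shows "\<exists>cs. cs \<noteq> [] \<and> distinct cs \<and> set cs \<subseteq> L \<and>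
           (\<forall>k<length cs. (cs!k, cs!((k+1) mod length cs)) \<in> E)"
proof -
  define P where "P p \<longleftrightarrow> p \<noteq> [] \<and> distinct p \<and> set p \<subseteq> L \<and>
     (\<forall>k. Suc k < length p \<longrightarrow> (p!k, p!Suc k) \<in> E)" for p
  obtain x where "x\<in>L" using ne by auto
  then have "P [x]" by (simp add: P_def)
  moreover have Q2: "\<forall>p. P p \<longrightarrow> length p < Suc (card L)"
  proof (intro allI impI)
    fix p assume "P p"
    then show "length p < Suc (card L)" unfolding P_def
      by (metis card_mono distinct_card fin less_Suc_eq_le)
  qed
  ultimately obtain p where Pp: "P p" and mx: "\<And>q. P q \<Longrightarrow> length q \<le> length p"
    using ex_has_greatest_nat[of P "[x]" length "Suc (card L)"] by blast
  let ?n = "length p - 1"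
  have lpos: "length p > 0" using Pp by (simp add: P_def)
  have "p ! ?n \<in> L" using Pp lpos unfolding P_def by (metis diff_less nth_mem subsetD zero_less_one)
  then obtain y where y: "y\<in>L" "(p!?n, y)\<in>E" using succ by blast
  have "y \<in> set p"
  proof (rule ccontr)
    assume ny: "y \<notin> set p"
    have "P (p @ [y])"
      unfolding P_def
    proof (intro conjI allI impI)
      show "p @ [y] \<noteq> []" by simp
      show "distinct (p @ [y])" using Pp ny by (simp add: P_def)
      show "set (p @ [y]) \<subseteq> L" using Pp y by (simp add: P_def)
      fix k assume k: "Suc k < length (p @ [y])"
      show "((p @ [y]) ! k, (p @ [y]) ! Suc k) \<in> E"
      proof (cases "Suc k < length p")
        case True
        then show ?thesis using Pp by (simp add: P_def nth_append)
      next
        case False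
        then have "k = ?n" "Suc k = length p" using k by auto
        then show ?thesis using y lpos by (simp add: nth_append)
      qed
    qed
    then show False using mx[of "p @ [y]"] by simp
  qed
  then obtain t where t: "t < length p" "p!t = y" by (auto simp: in_set_conv_nth)
  define cs where "cs = drop t p"
  have lcs: "length cs = length p - t" by (simp add: cs_def)
  show ?thesis
  proof (intro exI conjI allI impI)
    show "cs \<noteq> []" using t by (simp add: cs_def)
    show "distinct cs" using Pp by (simp add: P_def cs_def)
    show "set cs \<subseteq> L" using Pp by (auto simp: P_def cs_def dest: in_set_dropD)
    fix k assume k: "k < length cs"
    show "(cs ! k, cs ! ((k + 1) mod length cs)) \<in> E"
    proof (cases "Suc k < length cs")
      case True
      then have "(k+1) mod length cs = Suc k" by simp
      moreover have "Suc (t+k) < length p" using True lcs by simp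
      ultimately show ?thesis using Pp t unfolding P_def cs_def by auto
    next
      case False
      then have "k + 1 = length cs" using k by simp
      then have "(k+1) mod length cs = 0" by simp
      moreover have "t + k = ?n" using \<open>k+1 = length cs\<close> lcs t by simp
      ultimately show ?thesis using y t unfolding cs_def by simp
    qed
  qed
qed

theorem lemma3p4:
  fixes V W :: "'a set" and E :: "('a set \<times> 'a set) set" and m :: nat
  assumes "pseudo_USO V W E"
    and "cube_dim V W = m"
    and "m \<ge> 3"
    and "face_sink E V W V"
  shows "\<exists>cs. directed_cycle E cs \<and>
           (\<forall>X \<in> set cs. \<exists>i \<in> W - V. \<exists>j \<in> W - V. X = V \<union> {i} \<or> X = V \<union> {i, j})"
proof -
  have co: "cube_orientation V W E" and nu: "\<not> has_unique_sink E V W"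
    and faces: "\<And>U' W'. V \<subseteq> U' \<Longrightarrow> U' \<subseteq> W' \<Longrightarrow> W' \<subseteq> W \<Longrightarrow> interval U' W' \<noteq> interval V W
        \<Longrightarrow> has_unique_sink E U' W'"
    using assms(1) unfolding pseudo_USO_def by auto
  have VW: "V \<subseteq> W" and Esub: "E \<subseteq> {(X, symdiff X {i}) | X i. X \<in> interval V W \<and> i \<in> W - V}"
    using co unfolding cube_orientation_def by auto
  define D where "D = W - V"
  have cardD: "card D = m" using assms(2) by (simp add: cube_dim_def D_def)
  have finD: "finite D" using cardD assms(3) by (metis card.infinite not_numeral_le_zero)
  have sd: "\<And>X i. symdiff X {i} = (if i \<in> X then X - {i} else insert i X)"
    by (auto simp: symdiff_def)
  have Eedge: "\<And>X Y. (X,Y)\<in>E \<Longrightarrow> \<exists>i\<in>D. Y = symdiff X {i} \<and> X \<in> interval V W"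
    using Esub unfolding D_def by blast
  have Vs: "\<And>Y. Y \<in> interval V W \<Longrightarrow> (V, Y) \<notin> E" using assms(4) by (simp add: face_sink_def)
  obtain S where S: "face_sink E V W S" "S \<noteq> V"
    using nu assms(4) unfolding has_unique_sink_def by blast
  have SW: "S = W"
  proof (rule ccontr)
    assume "S \<noteq> W"
    moreover have "S \<subseteq> W" "V \<subseteq> S" using S by (auto simp: face_sink_def interval_def)
    ultimately obtain i where i: "i \<in> W" "i \<notin> S" by blast
    have iV: "i \<notin> V" using i \<open>V \<subseteq> S\<close> by blast
    have "interval V (W - {i}) \<noteq> interval V W"
      using VW i by (auto simp: interval_def)
    then have hu: "has_unique_sink E V (W - {i})"
      using faces[of V "W - {i}"] VW iV by blast
    have "face_sink E V (W - {i}) V" using assms(4) VW iV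
      by (auto simp: face_sink_def interval_def)
    moreover have "face_sink E V (W - {i}) S" using S i
      by (auto simp: face_sink_def interval_def)
    ultimately show False using hu S(2) unfolding has_unique_sink_def by blast
  qed
  have Wsink: "face_sink E V W W" using S SW by simp
  have other: "\<And>i. i \<in> D \<Longrightarrow> \<exists>j\<in>D. j \<noteq> i"
  proof -
    fix i assume "i \<in> D"
    show "\<exists>j\<in>D. j \<noteq> i"
    proof (rule ccontr)
      assume "\<not> (\<exists>j\<in>D. j \<noteq> i)"
      then have "D \<subseteq> {i}" by blast
      then have "card D \<le> 1" using card_mono[of "{i}" D] by simp
      then show False using cardD assms(3) by simp
    qed
  qed
  have up: "\<And>i. i \<in> D \<Longrightarrow> \<exists>j\<in>D. j \<noteq> i \<and> (insert i V, insert j (insert i V)) \<in> E"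
  proof -
    fix i assume i: "i \<in> D"
    have "interval (insert i V) W \<noteq> interval V W"
      using VW i by (auto simp: interval_def D_def)
    then have hu: "has_unique_sink E (insert i V) W"
      using faces[of "insert i V" W] VW i by (auto simp: D_def)
    have ws: "face_sink E (insert i V) W W" using Wsink i VW
      by (auto simp: face_sink_def interval_def D_def)
    obtain j where j: "j \<in> D" "j \<noteq> i" using other i by blast
    have ne: "insert i V \<noteq> W" using j by (auto simp: D_def)
    have "\<not> face_sink E (insert i V) W (insert i V)"
      using hu ws ne unfolding has_unique_sink_def by blast
    moreover have "insert i V \<in> interval (insert i V) W" using i VW by (auto simp: interval_def D_def)
    ultimately obtain Y where Y: "Y \<in> interval (insert i V) W" "(insert i V, Y) \<in> E"
      unfolding face_sink_def by blast
    then obtain l where l: "l \<in> D" "Y = symdiff (insert i V) {l}" using Eedge by blast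
    have "l \<notin> insert i V"
    proof
      assume "l \<in> insert i V"
      then have "Y = insert i V - {l}" using l by (simp add: symdiff_single)
      then show False using Y(1) \<open>l \<in> insert i V\<close> by (auto simp: interval_def)
    qed
    then have "Y = insert l (insert i V)" using l by (simp add: symdiff_single)
    then show "\<exists>j\<in>D. j \<noteq> i \<and> (insert i V, insert j (insert i V)) \<in> E"
      using Y l \<open>l \<notin> insert i V\<close> by blast
  qed
  have down: "\<And>i j. i\<in>D \<Longrightarrow> j\<in>D \<Longrightarrow> i\<noteq>j \<Longrightarrow> (V \<union> {i,j}, V \<union> {i}) \<in> E \<or> (V \<union> {i,j}, V \<union> {j}) \<in> E"
  proof -
    fix i j assume ij: "i\<in>D" "j\<in>D" "i\<noteq>j"
    have "\<not> D \<subseteq> {i,j}"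
    proof
      assume "D \<subseteq> {i,j}"
      then have "card D \<le> card {i,j}" by (intro card_mono) auto
      also have "\<dots> \<le> 2" by (simp add: card_insert_if)
      finally show False using cardD assms(3) by simp
    qed
    then obtain k where k: "k \<in> D" "k \<noteq> i" "k \<noteq> j" by blast
    have "interval V (V \<union> {i,j}) \<noteq> interval V W"
    proof
      assume "interval V (V \<union> {i,j}) = interval V W"
      moreover have "W \<in> interval V W" using VW by (simp add: interval_def)
      ultimately have "W \<in> interval V (V \<union> {i,j})" by simp
      then have "W \<subseteq> V \<union> {i,j}" by (simp add: interval_def)
      then show False using k by (auto simp: D_def)
    qed
    moreover have "V \<union> {i,j} \<subseteq> W" using ij VW by (auto simp: D_def)
    ultimately have hu: "has_unique_sink E V (V \<union> {i,j})"
      using faces[of V "V \<union> {i,j}"] by blast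
    have vs: "face_sink E V (V \<union> {i,j}) V" unfolding face_sink_def
    proof (intro conjI ballI)
      show "V \<in> interval V (V \<union> {i,j})" by (auto simp: interval_def)
      fix Y assume "Y \<in> interval V (V \<union> {i,j})"
      then have "Y \<in> interval V W" using ij VW by (auto simp: interval_def D_def)
      then show "(V,Y) \<notin> E" using Vs by blast
    qed
    have ne: "V \<union> {i,j} \<noteq> V" using ij by (auto simp: D_def)
    have "\<not> face_sink E V (V \<union> {i,j}) (V \<union> {i,j})"
      using hu vs ne unfolding has_unique_sink_def by blast
    then obtain Y where Y: "Y \<in> interval V (V \<union> {i,j})" "(V \<union> {i,j}, Y) \<in> E"
      unfolding face_sink_def interval_def by blast
    then obtain l where l: "l \<in> D" "Y = symdiff (V \<union> {i,j}) {l}" using Eedge by blast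
    have "l \<in> V \<union> {i,j}"
    proof (rule ccontr)
      assume "l \<notin> V \<union> {i,j}"
      then have "Y = insert l (V \<union> {i,j})" using l by (simp add: symdiff_single)
      then show False using Y(1) \<open>l \<notin> V \<union> {i,j}\<close> by (auto simp: interval_def)
    qed
    then have "l = i \<or> l = j" using l by (auto simp: D_def)
    moreover have "Y = V \<union> {i,j} - {l}" using l \<open>l \<in> V \<union> {i,j}\<close> by (simp add: symdiff_single)
    ultimately have "Y = V \<union> {j} \<or> Y = V \<union> {i}" using ij by (auto simp: D_def)
    then show "(V \<union> {i,j}, V \<union> {i}) \<in> E \<or> (V \<union> {i,j}, V \<union> {j}) \<in> E" using Y by auto
  qed
  define L where "L = (\<lambda>(i,j). V \<union> {i,j}) ` (D \<times> D)"
  have finL: "finite L" using finD by (simp add: L_def)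
  have "D \<noteq> {}" using cardD assms(3) by auto
  then have neL: "L \<noteq> {}" by (simp add: L_def)
  have succ: "\<forall>x\<in>L. \<exists>y\<in>L. (x,y)\<in>E"
  proof
    fix x assume "x \<in> L"
    then obtain i j where ij: "i \<in> D" "j \<in> D" "x = V \<union> {i,j}" by (auto simp: L_def)
    show "\<exists>y\<in>L. (x,y)\<in>E"
    proof (cases "i = j")
      case True
      then obtain j' where j': "j' \<in> D" "(insert i V, insert j' (insert i V)) \<in> E" using up ij by blast
      have "insert j' (insert i V) = V \<union> {i, j'}" by auto
      moreover have "V \<union> {i, j'} \<in> L" using ij j' by (auto simp: L_def)
      ultimately show ?thesis using j' ij True by (metis insert_is_Un insert_absorb2 sup_commute Un_insert_right)
    next
      case False
      have "V \<union> {i} = V \<union> {i,i}" "V \<union> {j} = V \<union> {j,j}" by auto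
      moreover have "V \<union> {i,i} \<in> L" "V \<union> {j,j} \<in> L" using ij by (auto simp: L_def)
      ultimately show ?thesis using down[OF ij(1,2) False] ij(3) by metis
    qed
  qed
  obtain cs where cs: "cs \<noteq> []" "distinct cs" "set cs \<subseteq> L"
    "\<forall>k<length cs. (cs!k, cs!((k+1) mod length cs)) \<in> E"
    using cycle_exists[OF finL neL succ] by blast
  have "length cs \<ge> 2"
  proof (rule ccontr)
    assume "\<not> length cs \<ge> 2"
    then have "length cs = 1" using cs(1) by (cases cs) (auto simp: Suc_le_eq)
    then have "(cs!0, cs!0) \<in> E" using cs(4) by auto
    then obtain l where "cs!0 = symdiff (cs!0) {l}" using Eedge by blast
    then show False using sd[of "cs!0" l] by (auto split: if_splits)
  qed
  then have "directed_cycle E cs" using cs by (simp add: directed_cycle_def)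
  moreover have "\<forall>X \<in> set cs. \<exists>i \<in> W - V. \<exists>j \<in> W - V. X = V \<union> {i} \<or> X = V \<union> {i, j}"
  proof
    fix X assume "X \<in> set cs"
    then have "X \<in> L" using cs(3) by blast
    then obtain i j where "i \<in> D" "j \<in> D" "X = V \<union> {i,j}" by (auto simp: L_def)
    then show "\<exists>i \<in> W - V. \<exists>j \<in> W - V. X = V \<union> {i} \<or> X = V \<union> {i, j}"
      unfolding D_def by blast
  qed
  ultimately show ?thesis by blast
qed

end
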